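(* Let $n$ be a positive integer, $k\ge2$ an integer, and $\beta,\alpha_0,\alpha_1,\dots,\alpha_n$ non-negative integers with $0\le\beta\le k-1$. Then $$\det_{0\le i,j\le n-1}\bigl(C_{(k-1)\alpha_i+j+\beta,k}+C_{(k-1)\alpha_{i+1}+j+\beta,k}\bigr)=\prod_{0\le i<j\le n}(\alpha_j-\alpha_i)\prod_{i=0}^{n-1}\frac{((k-1)i+\beta+n)!}{(ki+\beta)!}\prod_{i=0}^{n}\frac{(k\alpha_i+\beta)!}{\alpha_i!\,((k-1)\alpha_i+\beta+n)!}\times\sum_{s=0}^{n}\frac{\alpha_s!\,((k-1)\alpha_s+\beta+n)!}{(k\alpha_s+\beta)!\prod_{j=0}^{s-1}(\alpha_s-\alpha_j)\prod_{j=s+1}^{n}(\alpha_j-\alpha_s)}.$$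
   Context: For integers $k\ge2$ and $m\ge0$, the generalised Catalan number is $$C_{m,k}=\frac{m-(k-1)\lfloor\frac{m}{k-1}\rfloor+1}{m+\lfloor\frac{m}{k-1}\rfloor+1}\binom{m+\lfloor\frac{m}{k-1}\rfloor+1}{m+1}.$$ *)

theory Defs
  imports Main "HOL.Real" "Jordan_Normal_Form.Determinant"
begin

definition gen_catalan :: "nat \<Rightarrow> nat \<Rightarrow> real" where
  "gen_catalan m k =
     (let q = m div (k - 1) in
       (real (m - (k - 1) * q) + 1) / (real (m + q) + 1) * real ((m + q + 1) choose (m + 1)))"

end

theory Submission
  imports Defs
begin


lemma mat_mult_mat_nn:
  "mat n n f * mat n n g = mat n n (\<lambda>(i,j). \<Sum>s<n. f (i,s) * g (s,j))"
  by (rule eq_matI) (auto simp: scalar_prod_def row_def col_def lessThan_atLeast0 intro!: sum.cong)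

lemma det_mat_upper:
  assumes "\<And>i j. j < i \<Longrightarrow> i < n \<Longrightarrow> f (i,j) = 0"
  shows "det (mat n n f) = (\<Prod>i<n. f (i,i))"
proof -
  have "upper_triangular (mat n n f)" using assms by (auto simp: upper_triangular_def)
  then have "det (mat n n f) = prod_list (diag_mat (mat n n f))"
    by (rule det_upper_triangular) auto
  also have "\<dots> = (\<Prod>i<n. f (i,i))"
    by (simp add: diag_mat_def prod.list_conv_set_nth lessThan_atLeast0 cong: map_cong)
  finally show ?thesis .
qed

lemma det_mat_lower:
  assumes "\<And>i j. i < j \<Longrightarrow> j < n \<Longrightarrow> f (i,j) = 0"
  shows "det (mat n n f) = (\<Prod>i<n. f (i,i))"
proof -
  have "det (mat n n f) = prod_list (diag_mat (mat n n f))"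
    by (rule det_lower_triangular[of n]) (use assms in auto)
  also have "\<dots> = (\<Prod>i<n. f (i,i))"
    by (simp add: diag_mat_def prod.list_conv_set_nth lessThan_atLeast0 cong: map_cong)
  finally show ?thesis .
qed

definition vand :: "nat \<Rightarrow> (nat \<Rightarrow> real) \<Rightarrow> real mat" where
  "vand n x = mat n n (\<lambda>(i,m). x i ^ m)"
definition cfm :: "nat \<Rightarrow> (nat \<Rightarrow> real poly) \<Rightarrow> real mat" where
  "cfm n p = mat n n (\<lambda>(m,j). coeff (p j) m)"

lemma poly_sum_lessThan:
  fixes p :: "real poly"
  assumes "degree p < n"
  shows "poly p x = (\<Sum>m<n. x ^ m * coeff p m)"
proof -
  have "poly p x = (\<Sum>i\<le>degree p. coeff p i * x ^ i)" by (rule poly_altdef)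
  also have "\<dots> = (\<Sum>m<n. coeff p m * x ^ m)"
    by (rule sum.mono_neutral_left) (use assms in \<open>auto simp: coeff_eq_0\<close>)
  finally show ?thesis by (simp add: mult.commute)
qed

lemma eval_mat_factor:
  fixes p :: "nat \<Rightarrow> real poly" and x :: "nat \<Rightarrow> real"
  assumes "\<And>j. j < n \<Longrightarrow> degree (p j) < n"
  shows "mat n n (\<lambda>(i,j). poly (p j) (x i)) = vand n x * cfm n p"
  unfolding vand_def cfm_def mat_mult_mat_nn
  by (rule eq_matI) (auto simp: poly_sum_lessThan[OF assms])

lemma det_eval_mat:
  fixes p :: "nat \<Rightarrow> real poly" and x :: "nat \<Rightarrow> real"
  assumes "\<And>j. j < n \<Longrightarrow> degree (p j) < n"
  shows "det (mat n n (\<lambda>(i,j). poly (p j) (x i))) = det (vand n x) * det (cfm n p)"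
  using det_mult[of "vand n x" n "cfm n p"] eval_mat_factor[OF assms, where x=x]
  by (simp add: vand_def cfm_def)

definition newton :: "(nat \<Rightarrow> real) \<Rightarrow> nat \<Rightarrow> real poly" where
  "newton x j = (\<Prod>m<j. [:- x m, 1:])"

lemma newton_monic: "lead_coeff (newton x j) = 1" "degree (newton x j) = j"
proof -
  show "lead_coeff (newton x j) = 1" unfolding newton_def lead_coeff_prod by simp
  then have "newton x j \<noteq> 0" by auto
  show "degree (newton x j) = j" unfolding newton_def
    by (subst degree_prod_sum_eq) auto
qed

lemma coeff_newton: "coeff (newton x j) j = 1"
  using newton_monic[of x j] by simp

lemma det_vand: "det (vand n (x::nat\<Rightarrow>real)) = (\<Prod>i<n. \<Prod>m<i. (x i - x m))"
proof -
  have deg: "\<And>j. j < n \<Longrightarrow> degree (newton x j) < n" using newton_monic by auto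
  have "det (cfm n (newton x)) = 1"
    unfolding cfm_def
    by (subst det_mat_upper) (auto simp: newton_monic coeff_eq_0 coeff_newton)
  moreover have "det (mat n n (\<lambda>(i,j). poly (newton x j) (x i))) = (\<Prod>i<n. \<Prod>m<i. (x i - x m))"
    by (subst det_mat_lower) (auto simp: newton_def poly_prod)
  ultimately show ?thesis using det_eval_mat[OF deg, where x=x] by simp
qed



definition Hf :: "nat \<Rightarrow> nat \<Rightarrow> nat \<Rightarrow> real" where
  "Hf k q r = real (r+1) * fact (k*q+r) / (fact q * fact ((k-1)*q+r+1))"

lemma gc_Hf:
  assumes "k \<ge> 2"
  shows "gen_catalan m k = Hf k (m div (k-1)) (m mod (k-1))"
proof -
  obtain c where k: "k = Suc c" and c: "c \<ge> 1" using assms by (cases k) auto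
  define q where "q = m div c"
  define r where "r = m mod c"
  have m: "m = c*q + r" unfolding q_def r_def by simp
  have e1: "m - c*q = r" using m by simp
  have e2: "m + q + 1 = Suc (Suc c * q + r)" using m by simp
  have e3: "Suc c * q + r + 1 - (m+1) = q" using m by simp
  have bin: "real ((m + q + 1) choose (m + 1)) = fact (Suc c * q + r + 1) / (fact (m+1) * fact q)"
  proof -
    have "m + q + 1 = Suc c * q + r + 1" using m by simp
    moreover have "real ((Suc c*q+r+1) choose (m+1)) = fact (Suc c*q+r+1)/(fact (m+1)*fact(Suc c*q+r+1-(m+1)))"
      by (rule binomial_fact) (use m in simp)
    ultimately show ?thesis using e3 by (simp only:)
  qed
  have "gen_catalan m k = (real r + 1) / (real (m+q) + 1) * (fact (Suc c * q + r + 1) / (fact (m+1) * fact q))"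
    unfolding gen_catalan_def Let_def k diff_Suc_1 q_def[symmetric] e1 bin by (rule refl)
  also have "\<dots> = real (r+1) * fact (Suc c*q+r) / (fact q * fact (c*q+r+1))"
  proof -
    have f1: "fact (Suc c * q + r + 1) = real (Suc c * q + r + 1) * (fact (Suc c * q + r) :: real)"
      by (simp only: Suc_eq_plus1[symmetric] fact_Suc)
    have f2: "fact (m + 1) = real (m+1) * (fact m :: real)"
      by (simp only: Suc_eq_plus1[symmetric] fact_Suc)
    have f3: "fact (c*q+r + 1) = real (c*q+r+1) * (fact (c*q+r) :: real)"
      by (simp only: Suc_eq_plus1[symmetric] fact_Suc)
    have mq: "real (m+q) + 1 = real (Suc (Suc c * q + r))" using m by simp
    have mm: "m = c*q+r" by (rule m)
    show ?thesis unfolding f1 f2 mq f3 unfolding mm Suc_eq_plus1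
      by (simp add: field_simps del: of_nat_add of_nat_Suc) (simp add: algebra_simps)
  qed
  finally show ?thesis unfolding Hf_def k q_def r_def by simp
qed

lemma Hf_shift:
  assumes "k \<ge> 1"
  shows "Hf k (a+1) (Suc s) = Hf k (a+1) s + Hf k a (s+k)"
proof -
  obtain c where k: "k = Suc c" using assms by (cases k) auto
  define X where "X = Suc c * a + Suc c + s"
  define Y where "Y = c * a + Suc c + s"
  have e1: "Suc c * (a+1) + Suc s = Suc X" unfolding X_def by simp
  have e2: "c * (a+1) + Suc s + 1 = Suc Y" unfolding Y_def by simp
  have e3: "Suc c * (a+1) + s = X" unfolding X_def by simp
  have e4: "c * (a+1) + s + 1 = Y" unfolding Y_def by simp
  have e5: "Suc c * a + (s + Suc c) = X" unfolding X_def by simp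
  have e6: "c * a + (s + Suc c) + 1 = Suc Y" unfolding Y_def by simp
  have h1: "Hf k (a+1) (Suc s) = real (s+2) * (real (Suc X) * fact X) / ((real (Suc a) * fact a) * (real (Suc Y) * fact Y))"
    unfolding Hf_def k diff_Suc_1 e1 e2 by (simp add: Suc_eq_plus1[symmetric])
  have h2: "Hf k (a+1) s = real (s+1) * fact X / ((real (Suc a) * fact a) * fact Y)"
    unfolding Hf_def k diff_Suc_1 e3 e4 by (simp add: Suc_eq_plus1[symmetric])
  have h3: "Hf k a (s+k) = real (s+k+1) * fact X / (fact a * (real (Suc Y) * fact Y))"
    unfolding Hf_def k diff_Suc_1 e5 e6 by (simp add: Suc_eq_plus1[symmetric])
  have key: "real (s+2) * real (Suc X) = real (s+1) * real (Suc Y) + real (s+k+1) * real (Suc a)"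
    unfolding X_def Y_def k by (simp add: algebra_simps)
  have "real (s+2) * (real (Suc X) * fact X) / ((real (Suc a) * fact a) * (real (Suc Y) * fact Y))
     = (real (s+1) * real (Suc Y) + real (s+k+1) * real (Suc a)) * fact X / ((real (Suc a) * fact a) * (real (Suc Y) * fact Y))"
    using key by (simp add: mult.assoc[symmetric])
  also have "\<dots> = real (s+1) * fact X / ((real (Suc a) * fact a) * fact Y) + real (s+k+1) * fact X / (fact a * (real (Suc Y) * fact Y))"
    by (simp add: field_simps del: of_nat_Suc of_nat_add)
  finally show ?thesis unfolding h1 h2 h3 .
qed

lemma Hf_shift0:
  assumes "k \<ge> 1"
  shows "Hf k (a+1) 0 = Hf k a (k-1)"
proof -
  obtain c where k: "k = Suc c" using assms by (cases k) auto
  have h1: "Hf k (a+1) 0 = fact (Suc (Suc c * a + c)) / (real (Suc a) * fact a * fact (c*a + c + 1))"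
    unfolding Hf_def k by (simp add: algebra_simps)
  have h2: "Hf k a (k-1) = real (Suc c) * fact (Suc c * a + c) / (fact a * fact (c*a + c + 1))"
    unfolding Hf_def k by (simp add: algebra_simps)
  have f: "fact (Suc (Suc c * a + c)) = real (Suc c) * real (Suc a) * (fact (Suc c * a + c) :: real)"
    by (simp only: fact_Suc) (simp add: algebra_simps)
  show ?thesis unfolding h1 h2 f by (simp add: field_simps del: of_nat_Suc of_nat_add)
qed

definition Lsp :: "nat \<Rightarrow> nat \<Rightarrow> (nat \<Rightarrow> real) set" where
  "Lsp k m = {f. \<exists>c. \<forall>a. f a = (\<Sum>s\<in>{k-1..<m}. c s * Hf k a s)}"

lemma Lsp_zero: "(\<lambda>a. 0) \<in> Lsp k m"
  unfolding Lsp_def by (rule CollectI, rule exI[of _ "\<lambda>_. 0"]) simp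

lemma Lsp_add: "f \<in> Lsp k m \<Longrightarrow> g \<in> Lsp k m \<Longrightarrow> (\<lambda>a. f a + g a) \<in> Lsp k m"
  unfolding Lsp_def
proof (clarify)
  fix c d assume "\<forall>a. f a = (\<Sum>s\<in>{k-1..<m}. c s * Hf k a s)" "\<forall>a. g a = (\<Sum>s\<in>{k-1..<m}. d s * Hf k a s)"
  then show "\<exists>e. \<forall>a. f a + g a = (\<Sum>s\<in>{k-1..<m}. e s * Hf k a s)"
    by (intro exI[of _ "\<lambda>s. c s + d s"]) (simp add: sum.distrib distrib_right)
qed

lemma Lsp_smult: "f \<in> Lsp k m \<Longrightarrow> (\<lambda>a. r * f a) \<in> Lsp k m"
  unfolding Lsp_def
proof (clarify)
  fix c assume "\<forall>a. f a = (\<Sum>s\<in>{k-1..<m}. c s * Hf k a s)"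
  then show "\<exists>e. \<forall>a. r * f a = (\<Sum>s\<in>{k-1..<m}. e s * Hf k a s)"
    by (intro exI[of _ "\<lambda>s. r * c s"]) (simp add: sum_distrib_left mult.assoc)
qed

lemma Lsp_mono: "f \<in> Lsp k m \<Longrightarrow> m \<le> m' \<Longrightarrow> f \<in> Lsp k m'"
  unfolding Lsp_def
proof (clarify)
  fix c assume c: "\<forall>a. f a = (\<Sum>s\<in>{k-1..<m}. c s * Hf k a s)" and mm: "m \<le> m'"
  show "\<exists>e. \<forall>a. f a = (\<Sum>s\<in>{k-1..<m'}. e s * Hf k a s)"
  proof (intro exI[of _ "\<lambda>s. if s < m then c s else 0"] allI)
    fix a
    have "(\<Sum>s\<in>{k-1..<m'}. (if s < m then c s else 0) * Hf k a s) = (\<Sum>s\<in>{k-1..<m}. (if s < m then c s else 0) * Hf k a s)"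
      by (rule sum.mono_neutral_right) (use mm in auto)
    also have "\<dots> = (\<Sum>s\<in>{k-1..<m}. c s * Hf k a s)" by (rule sum.cong) auto
    finally show "f a = (\<Sum>s\<in>{k-1..<m'}. (if s < m then c s else 0) * Hf k a s)" using c by simp
  qed
qed

lemma Lsp_basis:
  assumes "k - 1 \<le> t" "t < m" shows "(\<lambda>a. Hf k a t) \<in> Lsp k m"
  unfolding Lsp_def
proof (rule CollectI, rule exI[of _ "\<lambda>s. if s = t then 1 else 0"], rule allI)
  fix a
  have "(\<Sum>s\<in>{k-1..<m}. (if s = t then 1 else 0) * Hf k a s) = (\<Sum>s\<in>{k-1..<m}. if s = t then Hf k a s else 0)"
    by (rule sum.cong) auto
  also have "\<dots> = Hf k a t" using assms by (simp add: sum.delta)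
  finally show "Hf k a t = (\<Sum>s\<in>{k-1..<m}. (if s = t then 1 else 0) * Hf k a s)" by simp
qed

lemma Lsp_sum: "finite S \<Longrightarrow> (\<And>s. s \<in> S \<Longrightarrow> g s \<in> Lsp k m) \<Longrightarrow> (\<lambda>a. \<Sum>s\<in>S. g s a) \<in> Lsp k m"
proof (induction S rule: finite_induct)
  case empty then show ?case using Lsp_zero by simp
next
  case (insert x F)
  then show ?case using Lsp_add[of "g x" k m "\<lambda>a. \<Sum>s\<in>F. g s a"] by simp
qed

lemma Lsp_diff: "f \<in> Lsp k m \<Longrightarrow> g \<in> Lsp k m \<Longrightarrow> (\<lambda>a. f a - g a) \<in> Lsp k m"
  using Lsp_add[of f k m "\<lambda>a. (-1) * g a"] Lsp_smult[of g k m "-1"] by simp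

lemma Hf_shift_Lsp:
  assumes "k \<ge> 1"
  shows "(\<lambda>a. Hf k (a+1) s) \<in> Lsp k (s+k)"
proof (induction s)
  case 0
  show ?case using Hf_shift0[OF assms] Lsp_basis[of k "k-1" "0+k"] assms by simp
next
  case (Suc s)
  have "(\<lambda>a. Hf k (a+1) s) \<in> Lsp k (Suc s + k)" by (rule Lsp_mono[OF Suc]) simp
  moreover have "(\<lambda>a. Hf k a (s+k)) \<in> Lsp k (Suc s + k)" by (rule Lsp_basis) auto
  ultimately show ?case using Lsp_add Hf_shift[OF assms] by simp
qed

lemma Lsp_shift:
  assumes "k \<ge> 1" and f: "f \<in> Lsp k m"
  shows "(\<lambda>a. f (a+1)) \<in> Lsp k (m+k-1)"
proof -
  obtain c where c: "\<And>a. f a = (\<Sum>s\<in>{k-1..<m}. c s * Hf k a s)" using f unfolding Lsp_def by auto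
  have "(\<lambda>a. \<Sum>s\<in>{k-1..<m}. c s * Hf k (a+1) s) \<in> Lsp k (m+k-1)"
  proof (rule Lsp_sum)
    fix s assume s: "s \<in> {k-1..<m}"
    have "(\<lambda>a. Hf k (a+1) s) \<in> Lsp k (m+k-1)" by (rule Lsp_mono[OF Hf_shift_Lsp[OF assms(1)]]) (use s in auto)
    then show "(\<lambda>a. c s * Hf k (a+1) s) \<in> Lsp k (m+k-1)" by (rule Lsp_smult)
  qed simp
  then show ?thesis using c by simp
qed

lemma Hf_diff_Lsp:
  assumes "k \<ge> 1"
  shows "(\<lambda>a. Hf k (a+u) v - Hf k a (v + u*(k-1))) \<in> Lsp k (v + u*(k-1))"
proof (induction u)
  case 0 then show ?case using Lsp_zero by simp
next
  case (Suc u)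
  define t where "t = v + u*(k-1)"
  have tt: "v + Suc u * (k-1) = t + k - 1" unfolding t_def using assms by simp
  have A: "(\<lambda>a. Hf k (a+1+u) v - Hf k (a+1) t) \<in> Lsp k (t+k-1)"
    using Lsp_shift[OF assms Suc[folded t_def]] by simp
  have B: "(\<lambda>a. Hf k (a+1) t - Hf k a (t+k-1)) \<in> Lsp k (t+k-1)"
  proof (cases t)
    case 0 then show ?thesis using Hf_shift0[OF assms] Lsp_zero by simp
  next
    case (Suc t')
    have "(\<lambda>a. Hf k (a+1) t') \<in> Lsp k (t+k-1)" using Hf_shift_Lsp[OF assms, of t'] Suc assms by simp
    moreover have "Hf k (a+1) t - Hf k a (t+k-1) = Hf k (a+1) t'" for a
      using Hf_shift[OF assms, of a t'] Suc assms by simp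
    ultimately show ?thesis by simp
  qed
  show ?case unfolding tt using Lsp_add[OF A B] by (simp add: algebra_simps)
qed

lemma gc_minus_Hf:
  assumes "k \<ge> 2"
  shows "(\<lambda>a. gen_catalan ((k-1)*a + t) k - Hf k a t) \<in> Lsp k t"
proof -
  have k1: "k - 1 > 0" using assms by simp
  have "gen_catalan ((k-1)*a + t) k = Hf k (a + t div (k-1)) (t mod (k-1))" for a
  proof -
    have "((k-1)*a + t) div (k-1) = a + t div (k-1)" using k1 by simp
    moreover have "((k-1)*a + t) mod (k-1) = t mod (k-1)" by simp
    ultimately show ?thesis using gc_Hf[OF assms] by simp
  qed
  moreover have "t mod (k-1) + t div (k-1) * (k-1) = t" by (rule mod_div_mult_eq)
  ultimately show ?thesis
    using Hf_diff_Lsp[of k "t div (k-1)" "t mod (k-1)"] assms by simp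
qed



lemma col_sum:
  assumes kb: "\<beta> \<le> k - 1" and j: "j < n"
  shows "(\<Sum>s<n. Hf k a (\<beta>+s) * (if s = j then 1 else if s < j \<and> k-1 \<le> \<beta>+s then C (\<beta>+s) else 0))
       = Hf k a (\<beta>+j) + (\<Sum>s\<in>{k-1..<\<beta>+j}. C s * Hf k a s)"
proof -
  have "(\<Sum>s<n. Hf k a (\<beta>+s) * (if s = j then 1 else if s < j \<and> k-1 \<le> \<beta>+s then C (\<beta>+s) else 0))
     = (\<Sum>s<n. (if s = j then Hf k a (\<beta>+j) else 0) + (if s < j \<and> k-1 \<le> \<beta>+s then C (\<beta>+s) * Hf k a (\<beta>+s) else 0))"
    by (rule sum.cong) auto
  also have "\<dots> = Hf k a (\<beta>+j) + (\<Sum>s\<in>{s. s < j \<and> k-1 \<le> \<beta>+s}. C (\<beta>+s) * Hf k a (\<beta>+s))"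
  proof -
    have "(\<Sum>s<n. (if s < j \<and> k-1 \<le> \<beta>+s then C (\<beta>+s) * Hf k a (\<beta>+s) else 0))
        = (\<Sum>s\<in>{s. s < j \<and> k-1 \<le> \<beta>+s}. C (\<beta>+s) * Hf k a (\<beta>+s))"
      by (rule sum.mono_neutral_cong_right) (use j in auto)
    then show ?thesis using j by (simp add: sum.distrib sum.delta)
  qed
  also have "(\<Sum>s\<in>{s. s < j \<and> k-1 \<le> \<beta>+s}. C (\<beta>+s) * Hf k a (\<beta>+s)) = (\<Sum>s\<in>{k-1..<\<beta>+j}. C s * Hf k a s)"
    by (rule sum.reindex_bij_witness[of _ "\<lambda>s. s - \<beta>" "\<lambda>s. \<beta> + s"]) (use kb in auto)
  finally show ?thesis .
qed

lemma det_G_eq_H: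
  assumes k: "k \<ge> 2" and kb: "\<beta> \<le> k - 1"
  shows "det (mat n n (\<lambda>(i,j). gen_catalan ((k-1)*a i + j + \<beta>) k)) = det (mat n n (\<lambda>(i,j). Hf k (a i) (\<beta>+j)))"
proof -
  have "\<forall>j. \<exists>c. \<forall>x. gen_catalan ((k-1)*x + (\<beta>+j)) k - Hf k x (\<beta>+j) = (\<Sum>s\<in>{k-1..<\<beta>+j}. c s * Hf k x s)"
    using gc_minus_Hf[OF k] unfolding Lsp_def by blast
  then obtain C where C: "\<And>j x. gen_catalan ((k-1)*x + (\<beta>+j)) k - Hf k x (\<beta>+j) = (\<Sum>s\<in>{k-1..<\<beta>+j}. C j s * Hf k x s)"
    by metis
  define Tf where "Tf = (\<lambda>(s,j). if s = j then 1 else if s < j \<and> k-1 \<le> \<beta>+s then C j (\<beta>+s) else (0::real))"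
  have pt: "gen_catalan ((k-1)*a i + j + \<beta>) k = (\<Sum>s<n. Hf k (a i) (\<beta> + s) * Tf (s, j))" if j: "j < n" for i j
  proof -
    have "(\<Sum>s<n. Hf k (a i) (\<beta> + s) * Tf (s, j)) = Hf k (a i) (\<beta>+j) + (\<Sum>s\<in>{k-1..<\<beta>+j}. C j s * Hf k (a i) s)"
      unfolding Tf_def using col_sum[OF kb, of j n "a i" "C j"] j by simp
    also have "\<dots> = gen_catalan ((k-1)*a i + j + \<beta>) k"
      using C[where j=j and x="a i"] by (simp add: add_ac)
    finally show ?thesis by simp
  qed
  have eq: "mat n n (\<lambda>(i,j). gen_catalan ((k-1)*a i + j + \<beta>) k) = mat n n (\<lambda>(i,j). Hf k (a i) (\<beta>+j)) * mat n n Tf"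
    unfolding mat_mult_mat_nn by (rule eq_matI) (auto simp: pt[simplified])
  have "det (mat n n Tf) = 1"
    by (subst det_mat_upper) (auto simp: Tf_def)
  then show ?thesis unfolding eq
    by (subst det_mult[of _ n]) auto
qed



lemma fact_add_prod: "fact (m+d) = (fact m :: real) * (\<Prod>p<d. real (m+1+p))"
  by (induction d) (simp_all add: algebra_simps)

lemma fact_add_prod_rev: "fact (m+d) = (fact m :: real) * (\<Prod>p<d. real (m+d-p))"
proof -
  have "(\<Prod>p<d. real (m+d-p)) = (\<Prod>p<d. real (m+1+(d - Suc p)))"
    by (rule prod.cong) auto
  also have "\<dots> = (\<Prod>p<d. real (m+1+p))" by (rule prod.nat_diff_reindex)
  finally show ?thesis using fact_add_prod by simp
qed

definition wf :: "nat \<Rightarrow> nat \<Rightarrow> nat \<Rightarrow> nat \<Rightarrow> real" where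
  "wf k \<beta> n a = fact (k*a+\<beta>) / (fact a * fact ((k-1)*a+\<beta>+n))"

definition Qp :: "nat \<Rightarrow> nat \<Rightarrow> nat \<Rightarrow> nat \<Rightarrow> real poly" where
  "Qp k \<beta> n j = smult (real (\<beta>+j+1))
     ((\<Prod>p<j. [:real (\<beta>+j-p), real k:]) * (\<Prod>p<n-j-1. [:real (\<beta>+j+2+p), real (k-1):]))"

lemma deg_Qp: "j < n \<Longrightarrow> degree (Qp k \<beta> n j) < n"
proof -
  assume j: "j < n"
  have d1: "degree (\<Prod>p<j. [:real (\<beta>+j-p), real k:]) \<le> j"
    by (rule order.trans[OF degree_prod_sum_le]) (auto intro: order.trans[OF sum_mono[of _ "\<lambda>_. 1"]])
  have d2: "degree (\<Prod>p<n-j-1. [:real (\<beta>+j+2+p), real (k-1):]) \<le> n-j-1"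
    by (rule order.trans[OF degree_prod_sum_le]) (auto intro: order.trans[OF sum_mono[of _ "\<lambda>_. 1"]])
  have "degree (Qp k \<beta> n j) \<le> degree ((\<Prod>p<j. [:real (\<beta>+j-p), real k:]) * (\<Prod>p<n-j-1. [:real (\<beta>+j+2+p), real (k-1):]))"
    unfolding Qp_def by (rule degree_smult_le)
  also have "\<dots> \<le> j + (n-j-1)" using degree_mult_le d1 d2 add_mono order.trans by blast
  finally show ?thesis using j by simp
qed

lemma H_eq:
  assumes k: "k \<ge> 1" and j: "j < n"
  shows "Hf k a (\<beta>+j) = wf k \<beta> n a * poly (Qp k \<beta> n j) (real a)"
proof -
  obtain c where kc: "k = Suc c" using k by (cases k) auto
  define P1 where "P1 = (\<Prod>p<j. real (k*a+\<beta>+j-p))"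
  define P2 where "P2 = (\<Prod>p<n-j-1. real ((k-1)*a+\<beta>+j+1+1+p))"
  have f1: "fact (k*a+(\<beta>+j)) = fact (k*a+\<beta>) * P1"
    unfolding P1_def using fact_add_prod_rev[of "k*a+\<beta>" j] by (simp add: add_ac)
  have f2: "fact ((k-1)*a+\<beta>+n) = fact ((k-1)*a+(\<beta>+j)+1) * P2"
    unfolding P2_def using fact_add_prod[of "(k-1)*a+(\<beta>+j)+1" "n-j-1"] j by (simp add: add_ac)
  have P2pos: "P2 > 0" unfolding P2_def by (rule prod_pos) (simp del: of_nat_add add: of_nat_0_less_iff)
  have pq1: "poly (\<Prod>p<j. [:real (\<beta>+j-p), real k:]) (real a) = P1"
    unfolding P1_def poly_prod by (rule prod.cong) (auto simp: of_nat_diff algebra_simps)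
  have pq2: "poly (\<Prod>p<n-j-1. [:real (\<beta>+j+2+p), real (k-1):]) (real a) = P2"
    unfolding P2_def poly_prod kc by (rule prod.cong) (auto simp: algebra_simps)
  have "poly (Qp k \<beta> n j) (real a) = real (\<beta>+j+1) * P1 * P2"
    unfolding Qp_def poly_smult poly_mult pq1 pq2 by simp
  moreover have "Hf k a (\<beta>+j) = real (\<beta>+j+1) * (fact (k*a+\<beta>) * P1) / (fact a * fact ((k-1)*a+(\<beta>+j)+1))"
    by (simp only: Hf_def f1)
  moreover have "wf k \<beta> n a = fact (k*a+\<beta>) / (fact a * (fact ((k-1)*a+(\<beta>+j)+1) * P2))"
    by (simp only: wf_def f2)
  moreover have "\<And>r X A F P1 P2 :: real. F \<noteq> 0 \<Longrightarrow> A \<noteq> 0 \<Longrightarrow> P2 \<noteq> 0 \<Longrightarrow>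
      r * (X * P1) / (A * F) = X / (A * (F * P2)) * (r * P1 * P2)"
    by (simp add: field_simps)
  ultimately show ?thesis using P2pos by simp
qed



definition Kc :: "nat \<Rightarrow> nat \<Rightarrow> nat \<Rightarrow> real" where
  "Kc k \<beta> n = (\<Prod>q<n. fact ((k-1)*q+\<beta>+n) / fact (k*q+\<beta>))"

lemma Kc_step:
  "Kc (Suc c) \<beta> (Suc n) = Kc (Suc c) \<beta> n * (real (\<beta>+n+1) * (\<Prod>p<n. real (\<beta>+n+Suc c+c*p)))"
proof -
  have e1: "fact (c*q+\<beta>+Suc n) = real (c*q+\<beta>+n+1) * (fact (c*q+\<beta>+n) :: real)" for q
    by (simp only: add_Suc_right fact_Suc) simp
  have e2: "fact (c*n+\<beta>+Suc n) = real (Suc c*n+\<beta>+1) * (fact (Suc c*n+\<beta>) :: real)"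
  proof -
    have "c*n+\<beta>+Suc n = Suc (Suc c*n+\<beta>)" by simp
    then show ?thesis by (simp only: fact_Suc) simp
  qed
  have "Kc (Suc c) \<beta> (Suc n) = (\<Prod>q<n. real (c*q+\<beta>+n+1) * (fact (c*q+\<beta>+n) / fact (Suc c*q+\<beta>))) *
        (real (c*n+\<beta>+n+1) * (fact (c*n+\<beta>+n) / fact (Suc c*n+\<beta>)))"
    unfolding Kc_def diff_Suc_1 prod.lessThan_Suc e1 by (simp only: mult.assoc times_divide_eq_right)
  also have "\<dots> = Kc (Suc c) \<beta> n * ((\<Prod>q<n. real (c*q+\<beta>+n+1)) * real (Suc c*n+\<beta>+1))"
  proof -
    have eq: "Suc c*n+\<beta> = c*n+\<beta>+n" by simp
    have "fact (c*n+\<beta>+n) / fact (Suc c*n+\<beta>) = (1::real)" by (simp only: eq) simp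
    then show ?thesis unfolding Kc_def diff_Suc_1 prod.distrib
      by (simp only: mult_1_right) (simp add: algebra_simps)
  qed
  also have "(\<Prod>q<n. real (c*q+\<beta>+n+1)) * real (Suc c*n+\<beta>+1) = real (\<beta>+n+1) * (\<Prod>p<n. real (\<beta>+n+Suc c+c*p))"
  proof (cases n)
    case 0 then show ?thesis by simp
  next
    case (Suc m)
    have "(\<Prod>q<n. real (c*q+\<beta>+n+1)) = real (\<beta>+n+1) * (\<Prod>q<m. real (c*Suc q+\<beta>+n+1))"
      unfolding Suc prod.lessThan_Suc_shift by simp
    moreover have "(\<Prod>p<n. real (\<beta>+n+Suc c+c*p)) = (\<Prod>p<m. real (\<beta>+n+Suc c+c*p)) * real (\<beta>+n+Suc c+c*m)"
      unfolding Suc prod.lessThan_Suc by simp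
    moreover have "(\<Prod>q<m. real (c*Suc q+\<beta>+n+1)) = (\<Prod>p<m. real (\<beta>+n+Suc c+c*p))"
      by (rule prod.cong) (auto simp: algebra_simps)
    moreover have "real (Suc c*n+\<beta>+1) = real (\<beta>+n+Suc c+c*m)" using Suc by (simp add: algebra_simps)
    ultimately show ?thesis by (simp add: algebra_simps)
  qed
  finally show ?thesis .
qed

lemma Kc_prod: "(\<Prod>i<n. real (\<beta>+i+1) * (\<Prod>p<i. real (\<beta>+i+Suc c+c*p))) = Kc (Suc c) \<beta> n"
proof (induction n)
  case 0 then show ?case by (simp add: Kc_def)
next
  case (Suc n) then show ?case by (simp add: Kc_step)
qed



lemma det_H_factor:
  assumes k: "k \<ge> 1"
  shows "det (mat n n (\<lambda>(i,j). Hf k (a i) (\<beta>+j))) =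
    (\<Prod>i<n. wf k \<beta> n (a i)) * (det (vand n (\<lambda>i. real (a i))) * det (cfm n (Qp k \<beta> n)))"
proof -
  have pt: "Hf k (a i) (\<beta>+j) = (\<Sum>s<n. (if i = s then wf k \<beta> n (a i) else 0) * poly (Qp k \<beta> n j) (real (a s)))"
    if "i < n" "j < n" for i j
  proof -
    have "(\<Sum>s<n. (if i = s then wf k \<beta> n (a i) else 0) * poly (Qp k \<beta> n j) (real (a s)))
      = (\<Sum>s<n. if i = s then wf k \<beta> n (a i) * poly (Qp k \<beta> n j) (real (a i)) else 0)"
      by (rule sum.cong) auto
    also have "\<dots> = wf k \<beta> n (a i) * poly (Qp k \<beta> n j) (real (a i))" using that by (simp add: sum.delta)
    finally show ?thesis using H_eq[OF k that(2)] by simp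
  qed
  have eq: "mat n n (\<lambda>(i,j). Hf k (a i) (\<beta>+j)) = mat n n (\<lambda>(i,j). if i = j then wf k \<beta> n (a i) else 0) * mat n n (\<lambda>(i,j). poly (Qp k \<beta> n j) (real (a i)))"
    unfolding mat_mult_mat_nn by (rule eq_matI) (auto simp: pt)
  have d1: "det (mat n n (\<lambda>(i,j). if i = j then wf k \<beta> n (a i) else 0)) = (\<Prod>i<n. wf k \<beta> n (a i))"
    by (subst det_mat_upper) auto
  have d2: "det (mat n n (\<lambda>(i,j). poly (Qp k \<beta> n j) (real (a i)))) = det (vand n (\<lambda>i. real (a i))) * det (cfm n (Qp k \<beta> n))"
    by (rule det_eval_mat) (rule deg_Qp)
  show ?thesis unfolding eq
    by (subst det_mult[of _ n]) (auto simp: d1 d2)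
qed



lemma det_cf:
  assumes k: "k \<ge> 2"
  shows "det (cfm n (Qp k \<beta> n)) = Kc k \<beta> n"
proof -
  obtain c where kc: "k = Suc c" and c1: "c \<ge> 1" using k by (cases k) auto
  have cpos: "real c > 0" using c1 by simp
  define xs where "xs = (\<lambda>i. - real (\<beta>+i+1) / real c)"
  have zero: "poly (Qp k \<beta> n j) (xs i) = 0" if "j < i" "i < n" for i j
  proof -
    have "poly (\<Prod>p<n-j-1. [:real (\<beta>+j+2+p), real (k-1):]) (xs i) = 0"
      unfolding poly_prod
    proof (rule prod_zero)
      show "\<exists>p\<in>{..<n-j-1}. poly [:real (\<beta>+j+2+p), real (k-1):] (xs i) = 0"
        by (rule bexI[of _ "i-j-1"]) (use that cpos in \<open>auto simp: xs_def kc\<close>)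
    qed simp
    then show ?thesis unfolding Qp_def by simp
  qed
  have dx: "det (mat n n (\<lambda>(i,j). poly (Qp k \<beta> n j) (xs i))) = (\<Prod>i<n. poly (Qp k \<beta> n i) (xs i))"
    by (subst det_mat_upper) (auto simp: zero)
  have V: "(\<Prod>m<i. (xs i - xs m)) = (\<Prod>p<i. - real (p+1) / real c)" for i
  proof -
    have "(\<Prod>m<i. (xs i - xs m)) = (\<Prod>p<i. (xs i - xs (i - Suc p)))"
      by (rule prod.nat_diff_reindex[symmetric])
    also have "\<dots> = (\<Prod>p<i. - real (p+1) / real c)"
      by (rule prod.cong) (use cpos in \<open>auto simp: xs_def of_nat_diff field_simps\<close>)
    finally show ?thesis .
  qed
  define g where "g = (\<lambda>i. real (\<beta>+i+1) * fact (n-i-1) * (\<Prod>p<i. real (\<beta>+i+Suc c+c*p)) / fact i)"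
  have diag: "poly (Qp k \<beta> n i) (xs i) = (\<Prod>m<i. (xs i - xs m)) * g i" if "i < n" for i
  proof -
    have B: "poly (\<Prod>p<n-i-1. [:real (\<beta>+i+2+p), real (k-1):]) (xs i) = fact (n-i-1)"
    proof -
      have "poly (\<Prod>p<n-i-1. [:real (\<beta>+i+2+p), real (k-1):]) (xs i) = (\<Prod>p<n-i-1. real (0+1+p))"
        unfolding poly_prod by (rule prod.cong) (use cpos in \<open>auto simp: xs_def kc field_simps\<close>)
      also have "\<dots> = fact (n-i-1)" using fact_add_prod[of 0 "n-i-1"] by simp
      finally show ?thesis .
    qed
    have A: "poly (\<Prod>p<i. [:real (\<beta>+i-p), real k:]) (xs i) = (\<Prod>p<i. (- real (p+1) / real c) * (real (\<beta>+i+Suc c+c*p) / real (p+1)))"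
    proof -
      have t: "poly [:real (\<beta>+i-p), real k:] (xs i) = (- real (p+1) / real c) * (real (\<beta>+i+Suc c+c*p) / real (p+1))"
        if "p < i" for p
      proof -
        have "real (\<beta>+i-p) = real \<beta> + real i - real p" using that by (simp add: of_nat_diff)
        then have "poly [:real (\<beta>+i-p), real k:] (xs i) = - real (\<beta>+i+Suc c+c*p) / real c"
          using cpos unfolding xs_def kc by (simp add: field_simps)
        also have "\<dots> = (- real (p+1) / real c) * (real (\<beta>+i+Suc c+c*p) / real (p+1))"
          by (simp del: of_nat_add of_nat_Suc)
        finally show ?thesis .
      qed
      show ?thesis unfolding poly_prod by (rule prod.cong[OF refl], rule t, simp)
    qed
    have fi: "(\<Prod>p<i. real (p+1)) = fact i" using fact_add_prod[of 0 i] by simp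
    have "poly (Qp k \<beta> n i) (xs i) = real (\<beta>+i+1) * ((\<Prod>p<i. - real (p+1) / real c) * ((\<Prod>p<i. real (\<beta>+i+Suc c+c*p)) / fact i)) * fact (n-i-1)"
      unfolding Qp_def poly_smult poly_mult A B prod.distrib prod_dividef fi by simp
    then show ?thesis unfolding V g_def by simp
  qed
  have vx: "det (vand n xs) \<noteq> 0"
    unfolding det_vand using cpos by (auto simp: xs_def field_simps)
  have "det (vand n xs) * det (cfm n (Qp k \<beta> n)) = det (vand n xs) * (\<Prod>i<n. g i)"
  proof -
    have "det (mat n n (\<lambda>(i,j). poly (Qp k \<beta> n j) (xs i))) = det (vand n xs) * det (cfm n (Qp k \<beta> n))"
      by (rule det_eval_mat) (rule deg_Qp)
    moreover have "(\<Prod>i<n. poly (Qp k \<beta> n i) (xs i)) = (\<Prod>i<n. (\<Prod>m<i. xs i - xs m) * g i)"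
      by (rule prod.cong) (auto simp: diag)
    ultimately show ?thesis unfolding dx det_vand prod.distrib by simp metis

  qed
  then have "det (cfm n (Qp k \<beta> n)) = (\<Prod>i<n. g i)" using vx by simp
  also have "\<dots> = (\<Prod>i<n. fact (n-i-1)) / (\<Prod>i<n. fact i) * (\<Prod>i<n. real (\<beta>+i+1) * (\<Prod>p<i. real (\<beta>+i+Suc c+c*p)))"
    unfolding g_def prod.distrib prod_dividef by (simp add: field_simps)
  also have "(\<Prod>i<n. fact (n-i-1)) = (\<Prod>i<n. (fact i :: real))"
    using prod.nat_diff_reindex[of "\<lambda>i. fact i :: real" n] by simp
  also have "(\<Prod>i<n. real (\<beta>+i+1) * (\<Prod>p<i. real (\<beta>+i+Suc c+c*p))) = Kc k \<beta> n"
    unfolding kc by (rule Kc_prod)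
  finally show ?thesis by simp
qed



lemma core_det:
  assumes k: "k \<ge> 2" and kb: "\<beta> \<le> k - 1"
  shows "det (mat n n (\<lambda>(i,j). gen_catalan ((k-1)*a i + j + \<beta>) k)) =
     (\<Prod>i<n. wf k \<beta> n (a i)) * ((\<Prod>i<n. \<Prod>m<i. real (a i) - real (a m)) * Kc k \<beta> n)"
  using det_G_eq_H[OF k kb, of n a] det_H_factor[of k n a \<beta>] det_vand[of n "\<lambda>i. real (a i)"] det_cf[OF k, of n \<beta>] k
  by simp

lemma rowsum_det:
  fixes F :: "nat \<times> nat \<Rightarrow> real"
  shows "det (mat n n (\<lambda>(i,j). F (i,j) + F (i+1,j))) = (\<Sum>s\<le>n. det (mat n n (\<lambda>(i,j). F (if i < s then i else Suc i, j))))"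
proof -
  define A where "A = mat (Suc n) (Suc n) (\<lambda>(i,j). if j = 0 then (-1)^i else F (i, j-1))"
  define E where "E = mat (Suc n) (Suc n) (\<lambda>(i,j). if j = i \<or> j = i+1 then 1 else (0::real))"
  have A: "A \<in> carrier_mat (Suc n) (Suc n)" and E: "E \<in> carrier_mat (Suc n) (Suc n)"
    unfolding A_def E_def by auto
  have A0: "A $$ (i,0) = (-1)^i" if "i < Suc n" for i using that unfolding A_def by simp
  have AS: "A $$ (i,Suc j) = F (i,j)" if "i < Suc n" "j < n" for i j using that unfolding A_def by simp
  have EA: "(E * A) $$ (i,j) = A $$ (i,j) + (if i < n then A $$ (i+1,j) else 0)" if "i < Suc n" "j < Suc n" for i j
  proof -
    have "(E * A) $$ (i,j) = (\<Sum>s<Suc n. E $$ (i,s) * A $$ (s,j))"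
      using that A E by (simp add: scalar_prod_def lessThan_atLeast0)
    also have "\<dots> = (\<Sum>s<Suc n. (if s = i then A $$ (i,j) else 0) + (if s = i+1 then A $$ (i+1,j) else 0))"
      by (rule sum.cong) (use that in \<open>auto simp: E_def\<close>)
    also have "\<dots> = A $$ (i,j) + (if i < n then A $$ (i+1,j) else 0)"
      using that by (simp add: sum.distrib sum.delta)
    finally show ?thesis .
  qed
  have dE: "det E = 1"
    unfolding E_def by (subst det_mat_upper) auto
  have "det (E * A) = det A" using det_mult[OF E A] dE by simp
  have EAc: "E * A \<in> carrier_mat (Suc n) (Suc n)" using E A by simp
  have "det (E * A) = (\<Sum>i<Suc n. (E * A) $$ (i,0) * cofactor (E * A) i 0)"
    by (rule laplace_expansion_column[OF EAc]) simp
  also have "\<dots> = (\<Sum>i<Suc n. if i = n then (-1)^n * cofactor (E * A) n 0 else 0)"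
    by (rule sum.cong) (auto simp: EA A0)
  also have "\<dots> = (-1)^n * cofactor (E * A) n 0" by (simp add: sum.delta)
  also have "\<dots> = det (mat_delete (E * A) n 0)"
    unfolding cofactor_def by (simp flip: power_add)
  also have "mat_delete (E * A) n 0 = mat n n (\<lambda>(i,j). F (i,j) + F (i+1,j))"
  proof (rule eq_matI)
    fix i j assume "i < dim_row (mat n n (\<lambda>(i,j). F (i,j) + F (i+1,j)))" "j < dim_col (mat n n (\<lambda>(i,j). F (i,j) + F (i+1,j)))"
    then have ij: "i < n" "j < n" by auto
    have "mat_delete (E * A) n 0 $$ (i,j) = (E * A) $$ (i, Suc j)"
      using ij carrier_matD[OF EAc] by (simp add: mat_delete_def del: index_mult_mat)
    also have "\<dots> = F (i,j) + F (i+1,j)" using EA[of i "Suc j"] AS[of i j] AS[of "Suc i" j] ij by simp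
    finally show "mat_delete (E * A) n 0 $$ (i,j) = mat n n (\<lambda>(i,j). F (i,j) + F (i+1,j)) $$ (i,j)" using ij by simp
  qed (use A E in auto)
  finally have L: "det (mat n n (\<lambda>(i,j). F (i,j) + F (i+1,j))) = det A" using \<open>det (E * A) = det A\<close> by simp
  have "det A = (\<Sum>i<Suc n. A $$ (i,0) * cofactor A i 0)"
    by (rule laplace_expansion_column[OF A]) simp
  also have "\<dots> = (\<Sum>i<Suc n. det (mat_delete A i 0))"
    by (rule sum.cong) (auto simp: A0 cofactor_def simp flip: power_add)
  also have "\<dots> = (\<Sum>s\<le>n. det (mat n n (\<lambda>(i,j). F (if i < s then i else Suc i, j))))"
  proof (rule sum.cong)
    show "{..<Suc n} = {..n}" by auto
  next
    fix s assume "s \<in> {..n}"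
    have "mat_delete A s 0 = mat n n (\<lambda>(i,j). F (if i < s then i else Suc i, j))"
      by (rule eq_matI) (use A in \<open>auto simp: mat_delete_def AS\<close>)
    then show "det (mat_delete A s 0) = det (mat n n (\<lambda>(i,j). F (if i < s then i else Suc i, j)))" by simp
  qed
  finally show ?thesis using L by simp
qed



lemma pair_prod:
  fixes x :: "nat \<Rightarrow> real"
  assumes sn: "s \<le> n"
  shows "(\<Prod>j\<in>{..n}. \<Prod>i<j. x j - x i) =
    (\<Prod>j<n. \<Prod>i<j. x (if j < s then j else Suc j) - x (if i < s then i else Suc i)) *
    ((\<Prod>i<s. x s - x i) * (\<Prod>j\<in>{s+1..n}. x j - x s))"
proof -
  define f where "f = (\<lambda>(j,i). x j - x (i::nat))"
  define S where "S = (SIGMA j:{..n}. {..<j})"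
  define U where "U = {p \<in> S. fst p = s \<or> snd p = s}"
  define sk where "sk = (\<lambda>i::nat. if i < s then i else Suc i)"
  define uk where "uk = (\<lambda>i::nat. if i < s then i else i - 1)"
  have finS: "finite S" unfolding S_def by auto
  have "(\<Prod>j\<in>{..n}. \<Prod>i<j. x j - x i) = prod f S"
    unfolding S_def f_def by (subst prod.Sigma) auto
  also have "\<dots> = prod f (S - U) * prod f U"
    by (rule prod.subset_diff) (auto simp: U_def finS)
  also have "prod f (S - U) = (\<Prod>j<n. \<Prod>i<j. x (sk j) - x (sk i))"
  proof -
    have "prod f (S - U) = prod (\<lambda>(j,i). f (sk j, sk i)) (SIGMA j:{..<n}. {..<j})"
      by (rule prod.reindex_bij_witness[of _ "\<lambda>(j,i). (sk j, sk i)" "\<lambda>(j,i). (uk j, uk i)"])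
        (use sn in \<open>auto simp: S_def U_def sk_def uk_def split: if_splits\<close>)
    also have "\<dots> = (\<Prod>j<n. \<Prod>i<j. x (sk j) - x (sk i))"
      unfolding f_def by (subst prod.Sigma) auto
    finally show ?thesis .
  qed
  also have "prod f U = (\<Prod>i<s. x s - x i) * (\<Prod>j\<in>{s+1..n}. x j - x s)"
  proof -
    have U: "U = (Pair s ` {..<s}) \<union> ((\<lambda>j. (j,s)) ` {s+1..n})"
      using sn by (auto simp: U_def S_def image_iff)
    have "prod f U = prod f (Pair s ` {..<s}) * prod f ((\<lambda>j. (j,s)) ` {s+1..n})"
      unfolding U by (rule prod.union_disjoint) auto
    also have "prod f (Pair s ` {..<s}) = (\<Prod>i<s. x s - x i)"
      by (subst prod.reindex) (auto simp: inj_on_def f_def)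
    also have "prod f ((\<lambda>j. (j,s)) ` {s+1..n}) = (\<Prod>j\<in>{s+1..n}. x j - x s)"
      by (subst prod.reindex) (auto simp: inj_on_def f_def)
    finally show ?thesis .
  qed
  finally show ?thesis unfolding sk_def .
qed



lemma wf_prod_split:
  assumes sn: "s \<le> n"
  shows "(\<Prod>i\<in>{..n}. h i) = h s * (\<Prod>i<n. h (if i < s then i else Suc i))"
proof -
  define sk where "sk = (\<lambda>i::nat. if i < s then i else Suc i)"
  have inj: "inj_on sk {..<n}" unfolding sk_def inj_on_def by auto
  have img: "sk ` {..<n} = {..n} - {s}"
  proof
    show "sk ` {..<n} \<subseteq> {..n} - {s}" unfolding sk_def by auto
    show "{..n} - {s} \<subseteq> sk ` {..<n}"
    proof
      fix x assume x: "x \<in> {..n} - {s}"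
      show "x \<in> sk ` {..<n}"
      proof (cases "x < s")
        case True then show ?thesis using x sn unfolding sk_def by (auto intro!: image_eqI[of _ _ x])
      next
        case False then show ?thesis using x sn unfolding sk_def by (auto intro!: image_eqI[of _ _ "x - 1"])
      qed
    qed
  qed
  have "(\<Prod>i\<in>{..n}. h i) = h s * (\<Prod>i\<in>{..n} - {s}. h i)"
    by (rule prod.remove) (use sn in auto)
  also have "(\<Prod>i\<in>{..n} - {s}. h i) = (\<Prod>i<n. h (sk i))"
    unfolding img[symmetric] by (rule prod.reindex[OF inj, unfolded comp_def])
  finally show ?thesis unfolding sk_def .
qed

theorem corollary7:
  fixes n k \<beta> :: nat and \<alpha> :: "nat \<Rightarrow> nat"
  assumes "n \<ge> 1" and "k \<ge> 2" and "\<beta> \<le> k - 1"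
    and "inj_on \<alpha> {..n}"
  shows "det (mat n n (\<lambda>(i, j).
            gen_catalan ((k - 1) * \<alpha> i + j + \<beta>) k + gen_catalan ((k - 1) * \<alpha> (i + 1) + j + \<beta>) k))
    = (\<Prod>j\<in>{..n}. \<Prod>i<j. (real (\<alpha> j) - real (\<alpha> i)))
      * (\<Prod>i<n. fact ((k - 1) * i + \<beta> + n) / fact (k * i + \<beta>))
      * (\<Prod>i\<in>{..n}. fact (k * \<alpha> i + \<beta>) / (fact (\<alpha> i) * fact ((k - 1) * \<alpha> i + \<beta> + n)))
      * (\<Sum>s\<in>{..n}. fact (\<alpha> s) * fact ((k - 1) * \<alpha> s + \<beta> + n)
           / (fact (k * \<alpha> s + \<beta>)
              * (\<Prod>j<s. (real (\<alpha> s) - real (\<alpha> j)))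
              * (\<Prod>j\<in>{s+1..n}. (real (\<alpha> j) - real (\<alpha> s)))))"
proof -
  note k = assms(2) and kb = assms(3) and inj = assms(4)
  define V where "V = (\<Prod>j\<in>{..n}. \<Prod>i<j. (real (\<alpha> j) - real (\<alpha> i)))"
  define W where "W = (\<Prod>i\<in>{..n}. wf k \<beta> n (\<alpha> i))"
  define A where "A = (\<lambda>s. (\<Prod>j<s. (real (\<alpha> s) - real (\<alpha> j))))"
  define B where "B = (\<lambda>s. (\<Prod>j\<in>{s+1..n}. (real (\<alpha> j) - real (\<alpha> s))))"
  have Anz: "A s \<noteq> 0" if "s \<le> n" for s
  proof -
    have "real (\<alpha> s) - real (\<alpha> j) \<noteq> 0" if "j < s" for j
    proof
      assume "real (\<alpha> s) - real (\<alpha> j) = 0"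
      then have "\<alpha> s = \<alpha> j" by simp
      moreover have "j \<in> {..n}" "s \<in> {..n}" using \<open>j < s\<close> \<open>s \<le> n\<close> by auto
      ultimately have "s = j" using inj by (auto simp: inj_on_def)
      then show False using \<open>j < s\<close> by simp
    qed
    then show ?thesis unfolding A_def by auto
  qed
  have Bnz: "B s \<noteq> 0" if "s \<le> n" for s
  proof -
    have "real (\<alpha> j) - real (\<alpha> s) \<noteq> 0" if "j \<in> {s+1..n}" for j
    proof
      assume "real (\<alpha> j) - real (\<alpha> s) = 0"
      then have "\<alpha> s = \<alpha> j" by simp
      moreover have "j \<in> {..n}" "s \<in> {..n}" using that \<open>s \<le> n\<close> by auto
      ultimately have "s = j" using inj by (auto simp: inj_on_def)
      then show False using that by simp
    qed
    then show ?thesis unfolding B_def by auto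
  qed
  have wnz: "wf k \<beta> n a \<noteq> 0" for a unfolding wf_def by simp
  have L: "det (mat n n (\<lambda>(i, j).
            gen_catalan ((k - 1) * \<alpha> i + j + \<beta>) k + gen_catalan ((k - 1) * \<alpha> (i + 1) + j + \<beta>) k))
     = (\<Sum>s\<le>n. det (mat n n (\<lambda>(i,j). gen_catalan ((k-1) * (\<alpha> (if i < s then i else Suc i)) + j + \<beta>) k)))"
    using rowsum_det[of n "\<lambda>(i,j). gen_catalan ((k - 1) * \<alpha> i + j + \<beta>) k"] by simp
  have trm: "det (mat n n (\<lambda>(i,j). gen_catalan ((k-1) * (\<alpha> (if i < s then i else Suc i)) + j + \<beta>) k))
     = V * Kc k \<beta> n * W * ((fact (\<alpha> s) * fact ((k - 1) * \<alpha> s + \<beta> + n) / fact (k * \<alpha> s + \<beta>)) / (A s * B s))"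
    if s: "s \<le> n" for s
  proof -
    have c: "det (mat n n (\<lambda>(i,j). gen_catalan ((k-1) * (\<alpha> (if i < s then i else Suc i)) + j + \<beta>) k))
      = (\<Prod>i<n. wf k \<beta> n (\<alpha> (if i < s then i else Suc i))) *
        ((\<Prod>i<n. \<Prod>m<i. real (\<alpha> (if i < s then i else Suc i)) - real (\<alpha> (if m < s then m else Suc m))) * Kc k \<beta> n)"
      by (rule core_det[OF k kb])
    have v: "V = (\<Prod>i<n. \<Prod>m<i. real (\<alpha> (if i < s then i else Suc i)) - real (\<alpha> (if m < s then m else Suc m))) * (A s * B s)"
      unfolding V_def A_def B_def by (rule pair_prod[OF s])
    have w: "W = wf k \<beta> n (\<alpha> s) * (\<Prod>i<n. wf k \<beta> n (\<alpha> (if i < s then i else Suc i)))"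
      unfolding W_def by (rule wf_prod_split[OF s])
    have inv: "fact (\<alpha> s) * fact ((k - 1) * \<alpha> s + \<beta> + n) / fact (k * \<alpha> s + \<beta>) = 1 / wf k \<beta> n (\<alpha> s)"
      unfolding wf_def by simp
    show ?thesis unfolding c v w inv using Anz[OF s] Bnz[OF s] wnz[of "\<alpha> s"]
      by (simp add: field_simps)
  qed
  have "(\<Sum>s\<le>n. det (mat n n (\<lambda>(i,j). gen_catalan ((k-1) * (\<alpha> (if i < s then i else Suc i)) + j + \<beta>) k)))
     = (\<Sum>s\<le>n. V * Kc k \<beta> n * W * ((fact (\<alpha> s) * fact ((k - 1) * \<alpha> s + \<beta> + n) / fact (k * \<alpha> s + \<beta>)) / (A s * B s)))"
    by (rule sum.cong[OF refl], rule trm, simp)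
  also have "\<dots> = V * Kc k \<beta> n * W * (\<Sum>s\<le>n. (fact (\<alpha> s) * fact ((k - 1) * \<alpha> s + \<beta> + n) / fact (k * \<alpha> s + \<beta>)) / (A s * B s))"
    by (simp add: sum_distrib_left)
  also have "(\<Sum>s\<le>n. (fact (\<alpha> s) * fact ((k - 1) * \<alpha> s + \<beta> + n) / fact (k * \<alpha> s + \<beta>)) / (A s * B s))
     = (\<Sum>s\<in>{..n}. fact (\<alpha> s) * fact ((k - 1) * \<alpha> s + \<beta> + n)
           / (fact (k * \<alpha> s + \<beta>) * A s * B s))"
    by (simp add: field_simps)
  finally show ?thesis unfolding L V_def W_def A_def B_def Kc_def wf_def .
qed


end
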